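(* Let $p\in[1,\infty]$, $d\in\mathbb N$, $m_0:=d$, $m_1\le m_2\le\cdots$ positive integers, $\mathbf W_n\in\mathbb R^{m_n\times m_{n-1}}$ and $\mathbf b_n\in\mathbb R^{m_n}$ for $n\in\mathbb N$. Suppose that for every sequence $(J_n)_{n\in\mathbb N}$ with $J_n\in\mathcal D_{m_n}$ both limits $$\lim_{n\to\infty}\mathbf I_{\infty,m_n}\prod_{i=1}^nJ_i\mathbf W_i \ \text{ in } \mathcal B(\mathbb R^d,\ell^p)\qquad\text{and}\qquad \lim_{n\to\infty}\mathbf I_{\infty,m_n}\sum_{i=1}^n\Big(\prod_{k=i+1}^nJ_k\mathbf W_k\Big)J_i\mathbf b_i\ \text{ in }\ell^p$$ exist. Then the ReLU networks $\mathcal N_n$ converge pointwise on $[0,1]^d$, i.e. for each $x\in[0,1]^d$ the sequence $\tilde{\mathcal N}_n(x)$ converges in $\ell^p$.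
   Context: $\sigma(t)=\max(t,0)$ applied componentwise; $\mathcal N_n(x):=\big(\sigma(\mathbf W_n\cdot+\mathbf b_n)\circ\cdots\circ\sigma(\mathbf W_1\cdot+\mathbf b_1)\big)(x)\in\mathbb R^{m_n}$ for $x\in[0,1]^d$, and $\tilde{\mathcal N}_n(x)\in\ell^p$ is the sequence whose first $m_n$ entries are those of $\mathcal N_n(x)$ and whose remaining entries are $0$. $\mathcal D_m$ is the set of $m\times m$ diagonal matrices with diagonal entries in $\{0,1\}$. $\mathbf I_{\infty,m}$ is the matrix with infinitely many rows and $m$ columns whose top $m\times m$ block is the identity and all other entries zero (the embedding $\mathbb R^m\to\ell^p$). $\mathcal B(\mathbb R^d,\ell^p)$ is the Banach space of bounded linear operators $\mathbb R^d\to\ell^p$ with operator norm induced by $\ell^p$ norms. Products are ordered $\prod_{i=k}^nA_i=A_n\cdots A_k$, and an empty product ($n<k$) is the $m_n\times m_n$ identity. *)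

theory Defs
  imports "HOL-Analysis.Analysis"
begin

text \<open>Real sequences (elements of R^nat), matrices with rows/columns indexed by nat.
  Finite vectors/matrices are represented by functions on nat with explicit size bounds.\<close>

definition relu :: "real \<Rightarrow> real" where
  "relu t = max t 0"

text \<open>Embedding I_{infty,k}: keep the first k entries, zero out the rest.\<close>
definition emb :: "nat \<Rightarrow> (nat \<Rightarrow> real) \<Rightarrow> (nat \<Rightarrow> real)" where
  "emb k v = (\<lambda>i. if i < k then v i else 0)"

definition embM :: "nat \<Rightarrow> (nat \<Rightarrow> nat \<Rightarrow> real) \<Rightarrow> (nat \<Rightarrow> nat \<Rightarrow> real)" where
  "embM k A = (\<lambda>i j. if i < k then A i j else 0)"

definition lp_norm :: "ereal \<Rightarrow> (nat \<Rightarrow> real) \<Rightarrow> real" where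
  "lp_norm p x = (if p = \<infinity> then Sup (range (\<lambda>i. \<bar>x i\<bar>))
     else (\<Sum>i. \<bar>x i\<bar> powr real_of_ereal p) powr (1 / real_of_ereal p))"

definition in_lp :: "ereal \<Rightarrow> (nat \<Rightarrow> real) \<Rightarrow> bool" where
  "in_lp p x = (if p = \<infinity> then bdd_above (range (\<lambda>i. \<bar>x i\<bar>))
     else summable (\<lambda>i. \<bar>x i\<bar> powr real_of_ereal p))"

definition lp_converges :: "ereal \<Rightarrow> (nat \<Rightarrow> nat \<Rightarrow> real) \<Rightarrow> bool" where
  "lp_converges p X = (\<exists>y. in_lp p y \<and> (\<lambda>n. lp_norm p (\<lambda>i. X n i - y i)) \<longlonglongrightarrow> 0)"

definition op_norm :: "ereal \<Rightarrow> nat \<Rightarrow> (nat \<Rightarrow> nat \<Rightarrow> real) \<Rightarrow> real" where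
  "op_norm p d A = Sup {lp_norm p (\<lambda>i. \<Sum>j<d. A i j * v j) | v. lp_norm p (emb d v) \<le> 1}"

text \<open>Convergence in B(R^d, l^p): the limit is a bounded operator, i.e. a matrix whose
  d columns lie in l^p.\<close>
definition op_converges :: "ereal \<Rightarrow> nat \<Rightarrow> (nat \<Rightarrow> nat \<Rightarrow> nat \<Rightarrow> real) \<Rightarrow> bool" where
  "op_converges p d X = (\<exists>L. (\<forall>j<d. in_lp p (\<lambda>i. L i j)) \<and>
      (\<lambda>n. op_norm p d (\<lambda>i j. X n i j - L i j)) \<longlonglongrightarrow> 0)"

definition matmul :: "nat \<Rightarrow> (nat \<Rightarrow> nat \<Rightarrow> real) \<Rightarrow> (nat \<Rightarrow> nat \<Rightarrow> real) \<Rightarrow> (nat \<Rightarrow> nat \<Rightarrow> real)" where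
  "matmul k A B = (\<lambda>i j. \<Sum>l<k. A i l * B l j)"

definition matvec :: "nat \<Rightarrow> (nat \<Rightarrow> nat \<Rightarrow> real) \<Rightarrow> (nat \<Rightarrow> real) \<Rightarrow> (nat \<Rightarrow> real)" where
  "matvec k A v = (\<lambda>i. \<Sum>l<k. A i l * v l)"

definition idM :: "nat \<Rightarrow> (nat \<Rightarrow> nat \<Rightarrow> real)" where
  "idM k = (\<lambda>i j. if i = j \<and> i < k then 1 else 0)"

definition diagM :: "nat \<Rightarrow> (nat \<Rightarrow> real) \<Rightarrow> (nat \<Rightarrow> nat \<Rightarrow> real)" where
  "diagM k J = (\<lambda>i j. if i = j \<and> i < k then J i else 0)"

text \<open>prodR m W J k n = prod_{l=k}^n J_l W_l  (= J_n W_n ... J_k W_k), an m_n x m_{k-1} matrix;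
  the empty product (n < k) is the m_n x m_n identity. Only used with k \<ge> 1.\<close>
fun prodR :: "(nat \<Rightarrow> nat) \<Rightarrow> (nat \<Rightarrow> nat \<Rightarrow> nat \<Rightarrow> real) \<Rightarrow> (nat \<Rightarrow> nat \<Rightarrow> real)
     \<Rightarrow> nat \<Rightarrow> nat \<Rightarrow> (nat \<Rightarrow> nat \<Rightarrow> real)" where
  "prodR m W J k 0 = idM (m 0)"
| "prodR m W J k (Suc n) = (if Suc n < k then idM (m (Suc n))
     else matmul (m (Suc n)) (diagM (m (Suc n)) (J (Suc n)))
            (matmul (m n) (W (Suc n)) (prodR m W J k n)))"

definition biasSum :: "(nat \<Rightarrow> nat) \<Rightarrow> (nat \<Rightarrow> nat \<Rightarrow> nat \<Rightarrow> real) \<Rightarrow> (nat \<Rightarrow> nat \<Rightarrow> real)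
     \<Rightarrow> (nat \<Rightarrow> nat \<Rightarrow> real) \<Rightarrow> nat \<Rightarrow> (nat \<Rightarrow> real)" where
  "biasSum m W b J n = (\<lambda>r. \<Sum>i\<in>{1..n}.
      matvec (m i) (prodR m W J (i + 1) n) (matvec (m i) (diagM (m i) (J i)) (b i)) r)"

text \<open>ReLU network N_n(x) in R^{m_n}, embedded into sequences (tilde N_n); N_0 x = x.\<close>
fun net :: "(nat \<Rightarrow> nat) \<Rightarrow> (nat \<Rightarrow> nat \<Rightarrow> nat \<Rightarrow> real) \<Rightarrow> (nat \<Rightarrow> nat \<Rightarrow> real)
     \<Rightarrow> nat \<Rightarrow> (nat \<Rightarrow> real) \<Rightarrow> (nat \<Rightarrow> real)" where
  "net m W b 0 x = emb (m 0) x"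
| "net m W b (Suc n) x = emb (m (Suc n))
     (\<lambda>i. relu ((\<Sum>k<m n. W (Suc n) i k * net m W b n x k) + b (Suc n) i))"

end

theory Submission
  imports Defs
begin

lemma q_ge1: "1 \<le> p \<Longrightarrow> p \<noteq> \<infinity> \<Longrightarrow> 1 \<le> real_of_ereal p \<and> p = ereal (real_of_ereal p)"
  by (cases p) auto

lemma term_le_suminf: "summable f \<Longrightarrow> (\<And>n. 0 \<le> (f n::real)) \<Longrightarrow> f i \<le> suminf f"
  using sum_le_suminf[of f "{i}"] by auto

lemma lp_nonneg: "in_lp p x \<Longrightarrow> 0 \<le> lp_norm p x"
proof (cases "p = \<infinity>")
  case True
  assume "in_lp p x"
  then have "bdd_above (range (\<lambda>i. \<bar>x i\<bar>))" using True by (simp add: in_lp_def)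
  then have "\<bar>x 0\<bar> \<le> Sup (range (\<lambda>i. \<bar>x i\<bar>))" by (intro cSUP_upper) auto
  then show ?thesis using True by (simp add: lp_norm_def)
next
  case False
  then show ?thesis by (simp add: lp_norm_def)
qed

lemma lp_comp: "1 \<le> p \<Longrightarrow> in_lp p x \<Longrightarrow> \<bar>x i\<bar> \<le> lp_norm p x"
proof (cases "p = \<infinity>")
  case True
  assume "in_lp p x"
  then have "bdd_above (range (\<lambda>i. \<bar>x i\<bar>))" using True by (simp add: in_lp_def)
  then have "\<bar>x i\<bar> \<le> Sup (range (\<lambda>i. \<bar>x i\<bar>))" by (intro cSUP_upper) auto
  then show ?thesis using True by (simp add: lp_norm_def)
next
  case False
  assume p: "1 \<le> p" and x: "in_lp p x"
  define q where "q = real_of_ereal p"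
  have q: "1 \<le> q" using q_ge1[OF p False] q_def by auto
  have s: "summable (\<lambda>i. \<bar>x i\<bar> powr q)" using x False by (simp add: in_lp_def q_def)
  have "\<bar>x i\<bar> powr q \<le> (\<Sum>i. \<bar>x i\<bar> powr q)" by (rule term_le_suminf[OF s]) auto
  then have "(\<bar>x i\<bar> powr q) powr (1/q) \<le> (\<Sum>i. \<bar>x i\<bar> powr q) powr (1/q)"
    using q by (intro powr_mono2) auto
  moreover have "(\<bar>x i\<bar> powr q) powr (1/q) = \<bar>x i\<bar>" using q by (simp add: powr_powr)
  ultimately show ?thesis using False by (simp add: lp_norm_def q_def)
qed

lemma lp_mono: "1 \<le> p \<Longrightarrow> in_lp p g \<Longrightarrow> (\<And>i. \<bar>f i\<bar> \<le> \<bar>g i\<bar>) \<Longrightarrow>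
   in_lp p f \<and> lp_norm p f \<le> lp_norm p g"
proof (cases "p = \<infinity>")
  case True
  assume g: "in_lp p g" and le: "\<And>i. \<bar>f i\<bar> \<le> \<bar>g i\<bar>"
  then have b: "bdd_above (range (\<lambda>i. \<bar>g i\<bar>))" using True by (simp add: in_lp_def)
  have u: "\<And>i. \<bar>f i\<bar> \<le> Sup (range (\<lambda>i. \<bar>g i\<bar>))"
    using le cSup_upper[OF _ b] by (meson order_trans rangeI)
  then have "bdd_above (range (\<lambda>i. \<bar>f i\<bar>))" by (intro bdd_aboveI2[where M="Sup (range (\<lambda>i. \<bar>g i\<bar>))"]) auto
  moreover have "Sup (range (\<lambda>i. \<bar>f i\<bar>)) \<le> Sup (range (\<lambda>i. \<bar>g i\<bar>))"
    using u by (intro cSUP_least) auto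
  ultimately show ?thesis using True by (simp add: lp_norm_def in_lp_def)
next
  case False
  assume p: "1 \<le> p" and g: "in_lp p g" and le: "\<And>i. \<bar>f i\<bar> \<le> \<bar>g i\<bar>"
  define q where "q = real_of_ereal p"
  have q: "1 \<le> q" using q_ge1[OF p False] q_def by auto
  have s: "summable (\<lambda>i. \<bar>g i\<bar> powr q)" using g False by (simp add: in_lp_def q_def)
  have l: "\<And>i. \<bar>f i\<bar> powr q \<le> \<bar>g i\<bar> powr q" using le q by (intro powr_mono2) auto
  have sf: "summable (\<lambda>i. \<bar>f i\<bar> powr q)"
    by (rule summable_comparison_test'[OF s]) (use l in auto)
  have "(\<Sum>i. \<bar>f i\<bar> powr q) \<le> (\<Sum>i. \<bar>g i\<bar> powr q)" by (rule suminf_le[OF l sf s])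
  then have "(\<Sum>i. \<bar>f i\<bar> powr q) powr (1/q) \<le> (\<Sum>i. \<bar>g i\<bar> powr q) powr (1/q)"
    using q sf by (intro powr_mono2 suminf_nonneg) auto
  then show ?thesis using False sf by (simp add: lp_norm_def in_lp_def q_def)
qed

lemma lp_finsupp: "1 \<le> p \<Longrightarrow> (\<And>i. N \<le> i \<Longrightarrow> x i = 0) \<Longrightarrow> in_lp p x"
proof (cases "p = \<infinity>")
  case True
  assume z: "\<And>i. N \<le> i \<Longrightarrow> x i = 0"
  have "\<And>i. \<bar>x i\<bar> \<le> (\<Sum>k<N. \<bar>x k\<bar>)"
  proof -
    fix i show "\<bar>x i\<bar> \<le> (\<Sum>k<N. \<bar>x k\<bar>)"
    proof (cases "i < N")
      case True then show ?thesis by (intro member_le_sum) auto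
    next
      case False then show ?thesis using z by (simp add: sum_nonneg)
    qed
  qed
  then have "bdd_above (range (\<lambda>i. \<bar>x i\<bar>))" by (intro bdd_aboveI2[where M="\<Sum>k<N. \<bar>x k\<bar>"]) auto
  then show ?thesis using True by (auto simp: in_lp_def)
next
  case False
  assume p: "1 \<le> p" and z: "\<And>i. N \<le> i \<Longrightarrow> x i = 0"
  have q: "1 \<le> real_of_ereal p" using q_ge1[OF p False] by auto
  have "summable (\<lambda>i. \<bar>x i\<bar> powr real_of_ereal p)"
    by (rule summable_finite[of "{..<N}"]) (use z q in auto)
  then show ?thesis using False by (simp add: in_lp_def)
qed

lemma lp_sum: "1 \<le> p \<Longrightarrow> 1 \<le> k \<Longrightarrow> (\<And>j. j < k \<Longrightarrow> in_lp p (u j)) \<Longrightarrow>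
   in_lp p (\<lambda>i. \<Sum>j<k. u j i) \<and> lp_norm p (\<lambda>i. \<Sum>j<k. u j i) \<le> real k ^ 2 * (\<Sum>j<k. lp_norm p (u j))"
proof (cases "p = \<infinity>")
  case True
  assume p: "1 \<le> p" and k: "1 \<le> k" and u: "\<And>j. j < k \<Longrightarrow> in_lp p (u j)"
  have N0: "\<And>j. j < k \<Longrightarrow> 0 \<le> lp_norm p (u j)" using u lp_nonneg by blast
  have b: "\<And>i. \<bar>\<Sum>j<k. u j i\<bar> \<le> (\<Sum>j<k. lp_norm p (u j))"
  proof -
    fix i
    have "\<bar>\<Sum>j<k. u j i\<bar> \<le> (\<Sum>j<k. \<bar>u j i\<bar>)" by (rule sum_abs)
    also have "\<dots> \<le> (\<Sum>j<k. lp_norm p (u j))" by (intro sum_mono lp_comp[OF p u]) auto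
    finally show "\<bar>\<Sum>j<k. u j i\<bar> \<le> (\<Sum>j<k. lp_norm p (u j))" .
  qed
  then have bd: "bdd_above (range (\<lambda>i. \<bar>\<Sum>j<k. u j i\<bar>))"
    by (intro bdd_aboveI2[where M="\<Sum>j<k. lp_norm p (u j)"]) auto
  have "Sup (range (\<lambda>i. \<bar>\<Sum>j<k. u j i\<bar>)) \<le> (\<Sum>j<k. lp_norm p (u j))"
    using b by (intro cSUP_least) auto
  also have "\<dots> \<le> real k ^ 2 * (\<Sum>j<k. lp_norm p (u j))"
  proof -
    have "1 \<le> real k ^ 2" using k by simp
    moreover have "0 \<le> (\<Sum>j<k. lp_norm p (u j))" using N0 by (intro sum_nonneg) auto
    ultimately show ?thesis using mult_right_mono[of 1 "real k ^ 2" "\<Sum>j<k. lp_norm p (u j)"] by simp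
  qed
  finally show ?thesis using bd True by (simp add: in_lp_def lp_norm_def)
next
  case False
  assume p: "1 \<le> p" and k: "1 \<le> k" and u: "\<And>j. j < k \<Longrightarrow> in_lp p (u j)"
  define q where "q = real_of_ereal p"
  have q: "1 \<le> q" using q_ge1[OF p False] q_def by auto
  define S where "S j = (\<Sum>i. \<bar>u j i\<bar> powr q)" for j
  define N where "N j = lp_norm p (u j)" for j
  have su: "\<And>j. j < k \<Longrightarrow> summable (\<lambda>i. \<bar>u j i\<bar> powr q)"
    using u False by (simp add: in_lp_def q_def)
  have NS: "N j = S j powr (1/q)" for j using False by (simp add: N_def S_def lp_norm_def q_def)
  have S0: "j < k \<Longrightarrow> 0 \<le> S j" for j unfolding S_def using su by (intro suminf_nonneg) auto
  have SN: "j < k \<Longrightarrow> S j = N j powr q" for j using S0[of j] q by (simp add: NS powr_powr)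
  have N0: "0 \<le> N j" for j by (simp add: NS)
  have pw: "\<bar>\<Sum>j<k. u j i\<bar> powr q \<le> real k powr q * (\<Sum>j<k. \<bar>u j i\<bar> powr q)" for i
  proof -
    define M where "M = Max ((\<lambda>j. \<bar>u j i\<bar>) ` {..<k})"
    have ne: "(\<lambda>j. \<bar>u j i\<bar>) ` {..<k} \<noteq> {}" using k by (auto simp: lessThan_empty_iff)
    obtain j0 where j0: "j0 < k" "M = \<bar>u j0 i\<bar>" using Max_in[OF _ ne] M_def by auto
    have Mge: "\<And>j. j < k \<Longrightarrow> \<bar>u j i\<bar> \<le> M" unfolding M_def by (intro Max_ge) auto
    have "\<bar>\<Sum>j<k. u j i\<bar> \<le> (\<Sum>j<k. \<bar>u j i\<bar>)" by (rule sum_abs)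
    also have "\<dots> \<le> (\<Sum>j<k. M)" using Mge by (intro sum_mono) auto
    also have "\<dots> = real k * M" by simp
    finally have "\<bar>\<Sum>j<k. u j i\<bar> powr q \<le> (real k * M) powr q" using q by (intro powr_mono2) auto
    also have "\<dots> = real k powr q * M powr q" using j0 by (simp add: powr_mult)
    also have "\<dots> \<le> real k powr q * (\<Sum>j<k. \<bar>u j i\<bar> powr q)"
    proof -
      have "\<bar>u j0 i\<bar> powr q \<le> (\<Sum>j<k. \<bar>u j i\<bar> powr q)"
        using j0 by (intro member_le_sum) auto
      then show ?thesis using j0 by (intro mult_left_mono) auto
    qed
    finally show ?thesis .
  qed
  have ssum: "summable (\<lambda>i. \<Sum>j<k. \<bar>u j i\<bar> powr q)" using su by (intro summable_sum) auto
  have ss: "summable (\<lambda>i. \<bar>\<Sum>j<k. u j i\<bar> powr q)"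
    by (rule summable_comparison_test'[OF summable_mult[OF ssum, of "real k powr q"]]) (use pw in auto)
  have "(\<Sum>i. \<bar>\<Sum>j<k. u j i\<bar> powr q) \<le> (\<Sum>i. real k powr q * (\<Sum>j<k. \<bar>u j i\<bar> powr q))"
    by (rule suminf_le[OF pw ss summable_mult[OF ssum]])
  also have "\<dots> = real k powr q * (\<Sum>j<k. S j)"
    using suminf_mult[OF ssum] suminf_sum[of "{..<k}" "\<lambda>j i. \<bar>u j i\<bar> powr q"] su
    by (simp add: S_def)
  also have "\<dots> \<le> real k powr q * (real k * (\<Sum>j<k. N j) powr q)"
  proof -
    have "(\<Sum>j<k. S j) \<le> (\<Sum>j<k. (\<Sum>j<k. N j) powr q)"
    proof (intro sum_mono)
      fix j assume j: "j \<in> {..<k}"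
      have "N j \<le> (\<Sum>j<k. N j)" using j N0 by (intro member_le_sum) auto
      then show "S j \<le> (\<Sum>j<k. N j) powr q" using SN[of j] j q N0 by (simp add: powr_mono2)
    qed
    then show ?thesis by (intro mult_left_mono) auto
  qed
  finally have A: "(\<Sum>i. \<bar>\<Sum>j<k. u j i\<bar> powr q) \<le> real k powr (q + 1) * (\<Sum>j<k. N j) powr q"
    using k by (simp add: powr_add mult.assoc)
  define T where "T = (\<Sum>j<k. N j)"
  have T0: "0 \<le> T" unfolding T_def using N0 by (intro sum_nonneg) auto
  have "(\<Sum>i. \<bar>\<Sum>j<k. u j i\<bar> powr q) powr (1/q) \<le> (real k powr (q + 1) * T powr q) powr (1/q)"
    using A q ss unfolding T_def by (intro powr_mono2 suminf_nonneg) auto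
  also have "\<dots> = real k powr ((q+1)/q) * T"
    using q T0 by (simp add: powr_mult powr_powr)
  also have "\<dots> \<le> real k powr 2 * T"
  proof -
    have "(q+1)/q \<le> 2" using q by (simp add: field_simps)
    then have "real k powr ((q+1)/q) \<le> real k powr 2" using k by (intro powr_mono) auto
    then show ?thesis using T0 by (intro mult_right_mono) auto
  qed
  also have "\<dots> = real k ^ 2 * T" using k by (simp add: powr_realpow)
  finally show ?thesis using False ss by (simp add: lp_norm_def in_lp_def q_def T_def N_def)
qed


lemma lp_unit: "1 \<le> p \<Longrightarrow> j < d \<Longrightarrow> lp_norm p (emb d (\<lambda>j'. if j' = j then 1 else 0)) = 1"
proof -
  assume p: "1 \<le> p" and j: "j < d"
  have e: "emb d (\<lambda>j'. if j' = j then 1 else 0) = (\<lambda>i. if i = j then 1 else 0)"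
    using j by (auto simp: emb_def)
  show ?thesis
  proof (cases "p = \<infinity>")
    case True
    have "Sup (range (\<lambda>i. \<bar>if i = j then 1 else (0::real)\<bar>)) = 1"
    proof (rule antisym)
      show "Sup (range (\<lambda>i. \<bar>if i = j then 1 else (0::real)\<bar>)) \<le> 1" by (intro cSUP_least) auto
      have "bdd_above (range (\<lambda>i. \<bar>if i = j then 1 else (0::real)\<bar>))"
        by (intro bdd_aboveI2[where M=1]) auto
      then show "1 \<le> Sup (range (\<lambda>i. \<bar>if i = j then 1 else (0::real)\<bar>))"
        using cSUP_upper[of j UNIV "\<lambda>i. \<bar>if i = j then 1 else (0::real)\<bar>"] by simp
    qed
    then show ?thesis using True e by (simp add: lp_norm_def)
  next
    case False
    define q where "q = real_of_ereal p"
    have q: "1 \<le> q" using q_ge1[OF p False] q_def by auto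
    have "(\<lambda>i. \<bar>if i = j then 1 else (0::real)\<bar> powr q) = (\<lambda>i. if i = j then 1 else 0)"
      using q by auto
    moreover have "(\<lambda>i. if i = j then (1::real) else 0) sums 1"
      using sums_single[of j "\<lambda>_. 1::real"] by simp
    ultimately have "(\<Sum>i. \<bar>if i = j then 1 else (0::real)\<bar> powr q) = 1" by (simp add: sums_iff)
    then show ?thesis using False e by (simp add: lp_norm_def q_def)
  qed
qed

lemma sum_delta_mult: "(\<Sum>l<(k::nat). (if i = l then a else 0) * f l) = (if i < k then a * (f i::real) else 0)"
proof -
  have "(\<Sum>l<k. (if i = l then a else 0) * f l) = (\<Sum>l\<in>{..<k}. if i = l then a * f l else 0)"
    by (rule sum.cong) auto
  also have "\<dots> = (if i < k then a * f i else 0)" using sum.delta'[of "{..<k}" i "\<lambda>l. a * f l"] by simp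
  finally show ?thesis .
qed

lemma matmul_diag: "matmul k (diagM k J) A i j = (if i < k then J i * A i j else 0)"
  unfolding matmul_def diagM_def by (simp add: sum_delta_mult)

lemma matvec_id: "matvec k (idM k) v r = (if r < k then v r else 0)"
  unfolding matvec_def idM_def by (simp add: sum_delta_mult)

lemma matvec_diag: "matvec k (diagM k J) v r = (if r < k then J r * v r else 0)"
  unfolding matvec_def diagM_def by (simp add: sum_delta_mult)

lemma prodR_Suc1: "prodR m W J 1 (Suc n) i j = (if i < m (Suc n) then
    J (Suc n) i * (\<Sum>l<m n. W (Suc n) i l * prodR m W J 1 n l j) else 0)"
  by (simp add: matmul_diag) (simp add: matmul_def)


lemma mv_step: "matvec k (\<lambda>r l. J r * (\<Sum>l3<K. W r l3 * P l3 l)) v r = J r * (\<Sum>l3<K. W r l3 * matvec k P v l3)"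
  unfolding matvec_def
  by (simp add: sum_distrib_left sum_distrib_right mult_ac sum.swap[where A="{..<k}"])

lemma prodR_step: "i \<le> n \<Longrightarrow> prodR m W J (Suc i) (Suc n) r l = (if r < m (Suc n) then
    J (Suc n) r * (\<Sum>l3<m n. W (Suc n) r l3 * prodR m W J (Suc i) n l3 l) else 0)"
  by (simp add: matmul_diag) (simp add: matmul_def)

lemma biasSum_Suc: "biasSum m W b J (Suc n) r = (if r < m (Suc n) then
   J (Suc n) r * ((\<Sum>l<m n. W (Suc n) r l * biasSum m W b J n l) + b (Suc n) r) else 0)"
proof -
  define v where "v i = matvec (m i) (diagM (m i) (J i)) (b i)" for i
  have top: "matvec (m (Suc n)) (prodR m W J (Suc n + 1) (Suc n)) (v (Suc n)) r
      = (if r < m (Suc n) then J (Suc n) r * b (Suc n) r else 0)"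
    by (simp add: matvec_id v_def matvec_diag)
  have mid: "matvec (m i) (prodR m W J (i + 1) (Suc n)) (v i) r =
     (if r < m (Suc n) then J (Suc n) r * (\<Sum>l3<m n. W (Suc n) r l3 * matvec (m i) (prodR m W J (i + 1) n) (v i) l3) else 0)"
    if i: "i \<in> {1..n}" for i
  proof (cases "r < m (Suc n)")
    case True
    have "matvec (m i) (prodR m W J (i + 1) (Suc n)) (v i) r =
       matvec (m i) (\<lambda>r l. J (Suc n) r * (\<Sum>l3<m n. W (Suc n) r l3 * prodR m W J (i + 1) n l3 l)) (v i) r"
      using True i by (simp add: matvec_def prodR_step del: prodR.simps)
    then show ?thesis using True by (simp add: mv_step del: prodR.simps)
  next
    case False
    then show ?thesis using i by (simp add: matvec_def prodR_step del: prodR.simps)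
  qed
  have "biasSum m W b J (Suc n) r = (\<Sum>i\<in>{1..Suc n}. matvec (m i) (prodR m W J (i + 1) (Suc n)) (v i) r)"
    by (simp add: biasSum_def v_def del: prodR.simps)
  also have "\<dots> = (\<Sum>i\<in>{1..n}. matvec (m i) (prodR m W J (i + 1) (Suc n)) (v i) r)
      + matvec (m (Suc n)) (prodR m W J (Suc n + 1) (Suc n)) (v (Suc n)) r"
    by (simp add: atLeastAtMostSuc_conv del: prodR.simps)
  also have "\<dots> = (if r < m (Suc n) then J (Suc n) r * ((\<Sum>l<m n. W (Suc n) r l * biasSum m W b J n l) + b (Suc n) r) else 0)"
    using mid top
    by (simp add: biasSum_def v_def sum_distrib_left sum_distrib_right distrib_left sum.swap[where A="{Suc 0..n}"] del: prodR.simps)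
  finally show ?thesis .
qed


definition actJ :: "(nat \<Rightarrow> nat) \<Rightarrow> (nat \<Rightarrow> nat \<Rightarrow> nat \<Rightarrow> real) \<Rightarrow> (nat \<Rightarrow> nat \<Rightarrow> real)
     \<Rightarrow> (nat \<Rightarrow> real) \<Rightarrow> nat \<Rightarrow> nat \<Rightarrow> real" where
  "actJ m W b x n i = (if n = 0 then 0 else
     if 0 < (\<Sum>k<m (n - 1). W n i k * net m W b (n - 1) x k) + b n i then 1 else 0)"

lemma actJ_01: "actJ m W b x n i \<in> {0, 1}"
  by (simp add: actJ_def)

lemma relu_actJ: "relu ((\<Sum>k<m n. W (Suc n) i k * net m W b n x k) + b (Suc n) i)
   = actJ m W b x (Suc n) i * ((\<Sum>k<m n. W (Suc n) i k * net m W b n x k) + b (Suc n) i)"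
  by (simp add: actJ_def relu_def)

lemma net_repr: "net m W b n x i = (\<Sum>j<m 0. embM (m n) (prodR m W (actJ m W b x) 1 n) i j * x j)
   + emb (m n) (biasSum m W b (actJ m W b x) n) i"
proof (induction n arbitrary: i)
  case 0
  show ?case
    by (simp add: emb_def embM_def biasSum_def idM_def sum_delta_mult)
next
  case (Suc n)
  define J where "J = actJ m W b x"
  define P where "P = prodR m W J 1 n"
  define B where "B = biasSum m W b J n"
  have IH: "k < m n \<Longrightarrow> net m W b n x k = (\<Sum>j<m 0. P k j * x j) + B k" for k
    using Suc.IH[of k] by (simp add: embM_def emb_def P_def B_def J_def)
  show ?case
  proof (cases "i < m (Suc n)")
    case False
    then show ?thesis by (simp add: emb_def embM_def del: prodR.simps)
  next
    case True
    have "(\<Sum>k<m n. W (Suc n) i k * net m W b n x k) = (\<Sum>k<m n. W (Suc n) i k * ((\<Sum>j<m 0. P k j * x j) + B k))"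
      using IH by (intro sum.cong) auto
    also have "\<dots> = (\<Sum>j<m 0. (\<Sum>k<m n. W (Suc n) i k * P k j) * x j) + (\<Sum>k<m n. W (Suc n) i k * B k)"
      by (simp add: distrib_left sum.distrib sum_distrib_left sum_distrib_right mult_ac sum.swap[where A="{..<m n}"])
    finally have pre: "(\<Sum>k<m n. W (Suc n) i k * net m W b n x k) = \<dots>" .
    have "net m W b (Suc n) x i = J (Suc n) i * ((\<Sum>k<m n. W (Suc n) i k * net m W b n x k) + b (Suc n) i)"
      using True by (simp add: emb_def relu_actJ J_def)
    also have "\<dots> = (\<Sum>j<m 0. (J (Suc n) i * (\<Sum>k<m n. W (Suc n) i k * P k j)) * x j)
        + J (Suc n) i * ((\<Sum>k<m n. W (Suc n) i k * B k) + b (Suc n) i)"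
      unfolding pre by (simp add: distrib_left sum_distrib_left mult_ac)
    also have "\<dots> = (\<Sum>j<m 0. embM (m (Suc n)) (prodR m W J 1 (Suc n)) i j * x j)
        + emb (m (Suc n)) (biasSum m W b J (Suc n)) i"
      using True by (simp add: embM_def emb_def prodR_Suc1[unfolded One_nat_def] biasSum_Suc P_def B_def del: prodR.simps)
    finally show ?thesis by (simp add: J_def)
  qed
qed


lemma lp_diff: "1 \<le> p \<Longrightarrow> in_lp p f \<Longrightarrow> in_lp p g \<Longrightarrow> in_lp p (\<lambda>i. f i - g i)"
proof -
  assume p: "1 \<le> p" and f: "in_lp p f" and g: "in_lp p g"
  define u where "u j = (if j = 0 then f else (\<lambda>i. - g i))" for j :: nat
  have "in_lp p (\<lambda>i. - g i)" using lp_mono[OF p g, of "\<lambda>i. - g i"] by simp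
  then have "\<And>j. j < 2 \<Longrightarrow> in_lp p (u j)" using f by (simp add: u_def)
  from lp_sum[OF p _ this] have "in_lp p (\<lambda>i. \<Sum>j<2. u j i)" by simp
  then show ?thesis by (simp add: u_def eval_nat_numeral)
qed

lemma op_bdd: "1 \<le> p \<Longrightarrow> 1 \<le> d \<Longrightarrow> (\<And>j. j < d \<Longrightarrow> in_lp p (\<lambda>i. A i j)) \<Longrightarrow>
   bdd_above {lp_norm p (\<lambda>i. \<Sum>j<d. A i j * v j) | v. lp_norm p (emb d v) \<le> 1}"
proof -
  assume p: "1 \<le> p" and d: "1 \<le> d" and A: "\<And>j. j < d \<Longrightarrow> in_lp p (\<lambda>i. A i j)"
  have "\<And>j. j < d \<Longrightarrow> in_lp p (\<lambda>i. \<bar>A i j\<bar>)" using lp_mono[OF p A] by simp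
  from lp_sum[OF p d this] have g: "in_lp p (\<lambda>i. \<Sum>j<d. \<bar>A i j\<bar>)" by simp
  show ?thesis
  proof (rule bdd_aboveI[where M="lp_norm p (\<lambda>i. \<Sum>j<d. \<bar>A i j\<bar>)"])
    fix z assume "z \<in> {lp_norm p (\<lambda>i. \<Sum>j<d. A i j * v j) | v. lp_norm p (emb d v) \<le> 1}"
    then obtain v where z: "z = lp_norm p (\<lambda>i. \<Sum>j<d. A i j * v j)" and v: "lp_norm p (emb d v) \<le> 1" by auto
    have ev: "in_lp p (emb d v)" by (rule lp_finsupp[OF p, of d]) (simp add: emb_def)
    have vb: "\<bar>v j\<bar> \<le> 1" if "j < d" for j
      using lp_comp[OF p ev, of j] v that by (simp add: emb_def)
    have "\<bar>\<Sum>j<d. A i j * v j\<bar> \<le> \<bar>\<Sum>j<d. \<bar>A i j\<bar>\<bar>" for i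
    proof -
      have "\<bar>\<Sum>j<d. A i j * v j\<bar> \<le> (\<Sum>j<d. \<bar>A i j * v j\<bar>)" by (rule sum_abs)
      also have "\<dots> \<le> (\<Sum>j<d. \<bar>A i j\<bar>)"
        using vb by (intro sum_mono) (simp add: abs_mult mult_left_le)
      also have "\<dots> = \<bar>\<Sum>j<d. \<bar>A i j\<bar>\<bar>" by (simp add: sum_nonneg)
      finally show ?thesis .
    qed
    then show "z \<le> lp_norm p (\<lambda>i. \<Sum>j<d. \<bar>A i j\<bar>)"
      using lp_mono[OF p g, of "\<lambda>i. \<Sum>j<d. A i j * v j"] z by blast
  qed
qed

lemma col_le_op: "1 \<le> p \<Longrightarrow> 1 \<le> d \<Longrightarrow> (\<And>j. j < d \<Longrightarrow> in_lp p (\<lambda>i. A i j)) \<Longrightarrow> j < d \<Longrightarrow>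
   lp_norm p (\<lambda>i. A i j) \<le> op_norm p d A"
proof -
  assume p: "1 \<le> p" and d: "1 \<le> d" and A: "\<And>j. j < d \<Longrightarrow> in_lp p (\<lambda>i. A i j)" and j: "j < d"
  define e where "e = (\<lambda>j'. if j' = j then 1 else (0::real))"
  have "(\<lambda>i. \<Sum>j'<d. A i j' * e j') = (\<lambda>i. A i j)"
    using j by (simp add: e_def if_distrib sum.delta' cong: if_cong)
  moreover have "lp_norm p (emb d e) \<le> 1" using lp_unit[OF p j] by (simp add: e_def)
  ultimately have "lp_norm p (\<lambda>i. A i j) \<in> {lp_norm p (\<lambda>i. \<Sum>j<d. A i j * v j) | v. lp_norm p (emb d v) \<le> 1}"
    by (metis (mono_tags, lifting) mem_Collect_eq)
  then show ?thesis unfolding op_norm_def by (rule cSup_upper[OF _ op_bdd[OF p d A]])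
qed


theorem theorem3p6:
  fixes p :: ereal and d :: nat and m :: "nat \<Rightarrow> nat"
    and W :: "nat \<Rightarrow> nat \<Rightarrow> nat \<Rightarrow> real" and b :: "nat \<Rightarrow> nat \<Rightarrow> real"
  assumes p: "1 \<le> p"
    and d: "1 \<le> d"
    and m0: "m 0 = d"
    and mpos: "\<forall>n\<ge>1. 0 < m n"
    and mmono: "\<forall>n\<ge>1. m n \<le> m (Suc n)"
    and lim_W: "\<forall>J :: nat \<Rightarrow> nat \<Rightarrow> real. (\<forall>n i. J n i \<in> {0, 1}) \<longrightarrow>
        op_converges p d (\<lambda>n. embM (m n) (prodR m W J 1 n))"
    and lim_b: "\<forall>J :: nat \<Rightarrow> nat \<Rightarrow> real. (\<forall>n i. J n i \<in> {0, 1}) \<longrightarrow>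
        lp_converges p (\<lambda>n. emb (m n) (biasSum m W b J n))"
  shows "\<forall>x :: nat \<Rightarrow> real. (\<forall>j<d. 0 \<le> x j \<and> x j \<le> 1) \<longrightarrow>
           lp_converges p (\<lambda>n. net m W b n x)"
proof (intro allI impI)
  fix x :: "nat \<Rightarrow> real" assume x: "\<forall>j<d. 0 \<le> x j \<and> x j \<le> 1"
  define J where "J = actJ m W b x"
  have J01: "\<forall>n i. J n i \<in> {0, 1}" unfolding J_def using actJ_01 by blast
  define X where "X n = embM (m n) (prodR m W J 1 n)" for n
  define B where "B n = emb (m n) (biasSum m W b J n)" for n
  obtain L where L: "\<And>j. j < d \<Longrightarrow> in_lp p (\<lambda>i. L i j)"
    and Llim: "(\<lambda>n. op_norm p d (\<lambda>i j. X n i j - L i j)) \<longlonglongrightarrow> 0"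
    using lim_W J01 unfolding op_converges_def X_def by blast
  obtain yB where yB: "in_lp p yB" and Blim: "(\<lambda>n. lp_norm p (\<lambda>i. B n i - yB i)) \<longlonglongrightarrow> 0"
    using lim_b J01 unfolding lp_converges_def B_def by blast
  define A where "A n i j = X n i j - L i j" for n i j
  have Xc: "in_lp p (\<lambda>i. X n i j)" for n j
    by (rule lp_finsupp[OF p, of "m n"]) (simp add: X_def embM_def)
  have Bc: "in_lp p (B n)" for n
    by (rule lp_finsupp[OF p, of "m n"]) (simp add: B_def emb_def)
  have Ac: "j < d \<Longrightarrow> in_lp p (\<lambda>i. A n i j)" for n j
    unfolding A_def by (rule lp_diff[OF p Xc L])
  have BD: "in_lp p (\<lambda>i. B n i - yB i)" for n by (rule lp_diff[OF p Bc yB])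
  have xb: "j < d \<Longrightarrow> \<bar>x j\<bar> \<le> 1" for j using x by auto
  define y where "y i = (\<Sum>j<d. L i j * x j) + yB i" for i
  define u where "u j = (if j < d then (\<lambda>i. L i j * x j) else yB)" for j
  have uc: "j < Suc d \<Longrightarrow> in_lp p (u j)" for j
  proof (cases "j < d")
    case True
    then show ?thesis using lp_mono[OF p L[OF True], of "\<lambda>i. L i j * x j"] xb[OF True]
      by (simp add: u_def abs_mult mult_left_le)
  next
    case False then show ?thesis using yB by (simp add: u_def)
  qed
  have "in_lp p (\<lambda>i. \<Sum>j<Suc d. u j i)" using lp_sum[where k="Suc d" and u=u, OF p _ uc] by simp
  moreover have "(\<lambda>i. \<Sum>j<Suc d. u j i) = y"
    by (auto simp: y_def u_def intro!: sum.cong)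
  ultimately have yc: "in_lp p y" by simp
  define w where "w n j = (if j < d then (\<lambda>i. A n i j * x j) else (\<lambda>i. B n i - yB i))" for n j
  have wc: "j < Suc d \<Longrightarrow> in_lp p (w n j)" for n j
  proof (cases "j < d")
    case True
    then show ?thesis using lp_mono[OF p Ac[of j n, OF True], of "\<lambda>i. A n i j * x j"] xb[OF True]
      by (simp add: w_def abs_mult mult_left_le)
  next
    case False then show ?thesis using BD by (simp add: w_def)
  qed
  have diff: "(\<lambda>i. net m W b n x i - y i) = (\<lambda>i. \<Sum>j<Suc d. w n j i)" for n
  proof
    fix i
    have "net m W b n x i = (\<Sum>j<d. X n i j * x j) + B n i"
      using net_repr[of m W b n x i] m0 by (simp add: X_def B_def J_def)
    then show "net m W b n x i - y i = (\<Sum>j<Suc d. w n j i)"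
      by (simp add: y_def w_def A_def algebra_simps sum_subtractf)
  qed
  have wn0: "j < Suc d \<Longrightarrow> 0 \<le> lp_norm p (w n j)" for n j using wc lp_nonneg by blast
  have wlim: "(\<lambda>n. lp_norm p (w n j)) \<longlonglongrightarrow> 0" if j: "j < Suc d" for j
  proof (cases "j < d")
    case True
    have le: "lp_norm p (w n j) \<le> op_norm p d (A n)" for n
    proof -
      have "lp_norm p (w n j) \<le> lp_norm p (\<lambda>i. A n i j)"
        using lp_mono[OF p Ac[of j n, OF True], of "\<lambda>i. A n i j * x j"] xb[OF True] True
        by (simp add: w_def abs_mult mult_left_le)
      also have "\<dots> \<le> op_norm p d (A n)" by (rule col_le_op[OF p d Ac True])
      finally show ?thesis .
    qed
    have "A n = (\<lambda>i j. X n i j - L i j)" for n by (intro ext) (simp add: A_def)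
    then have "(\<lambda>n. op_norm p d (A n)) \<longlonglongrightarrow> 0" using Llim by simp
    then show ?thesis
      by (rule tendsto_sandwich[rotated 2, OF tendsto_const]) (use le wn0[OF j] in auto)
  next
    case False then show ?thesis using Blim by (simp add: w_def)
  qed
  have "(\<lambda>n. real (Suc d) ^ 2 * (\<Sum>j<Suc d. lp_norm p (w n j))) \<longlonglongrightarrow> real (Suc d) ^ 2 * 0"
    by (intro tendsto_mult tendsto_const tendsto_null_sum wlim) auto
  then have R: "(\<lambda>n. real (Suc d) ^ 2 * (\<Sum>j<Suc d. lp_norm p (w n j))) \<longlonglongrightarrow> 0" by simp
  have up: "lp_norm p (\<lambda>i. net m W b n x i - y i) \<le> real (Suc d) ^ 2 * (\<Sum>j<Suc d. lp_norm p (w n j))" for n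
    unfolding diff using lp_sum[where k="Suc d" and u="w n", OF p _ wc] by simp
  have lo: "0 \<le> lp_norm p (\<lambda>i. net m W b n x i - y i)" for n
    unfolding diff using lp_sum[where k="Suc d" and u="w n", OF p _ wc] lp_nonneg by simp
  have "(\<lambda>n. lp_norm p (\<lambda>i. net m W b n x i - y i)) \<longlonglongrightarrow> 0"
    by (rule tendsto_sandwich[OF _ _ tendsto_const R]) (use up lo in auto)
  then show "lp_converges p (\<lambda>n. net m W b n x)" using yc unfolding lp_converges_def by blast
qed

end
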